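(* Let $k$ be an integer and $l,t$ integers with $1\le l,t\le k-2\le q-2$. Let $r\in\mathbb F$ and let $X:\mathbb F\to C$ be any function. Then $$\sum_{b\in\mathbb F}\ \sum_{s\in\mathbb F,\,s\ne b}\frac{(b-r)^t}{(s-b)^l}X(s)=\begin{cases}\sum_{s\in\mathbb F}(-1)^{l+1}\binom{t}{l}(s-r)^{t-l}X(s)&\text{if } t>l,\\ \sum_{s\in\mathbb F}(-1)^{l+1}X(s)&\text{if } t=l,\\ 0&\text{if } t<l.\end{cases}$$
   Context: $\mathbb F$ is a finite field with $q$ elements, and $C$ is a field containing $\mathbb F$ (in the paper, the completion of an algebraic closure of $\mathbb F((1/T))$). Binomial coefficients are read in $\mathbb F$; $0^0=1$. *)

theory Defs
  imports Main
begin

text \<open>A ring homomorphism (hence, between fields, an embedding) of the finite field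
  into the field C; it realises "C is a field containing F".\<close>
definition field_embedding :: "('f::field \<Rightarrow> 'c::field) \<Rightarrow> bool" where
  "field_embedding \<phi> \<longleftrightarrow>
     \<phi> 1 = 1 \<and> (\<forall>x y. \<phi> (x + y) = \<phi> x + \<phi> y) \<and> (\<forall>x y. \<phi> (x * y) = \<phi> x * \<phi> y)"

end

theory Submission
  imports Defs "HOL-Computational_Algebra.Polynomial"
begin

lemma card_char0: "of_nat (card (UNIV::'f::{finite,field} set)) = (0::'f)"
proof -
  have "(\<Sum>x\<in>(UNIV::'f set). x) = (\<Sum>x\<in>UNIV. x + 1)"
    by (rule sum.reindex_bij_witness[of _ "\<lambda>x. x + 1" "\<lambda>x. x - 1"]) auto
  also have "\<dots> = (\<Sum>x\<in>UNIV. x) + of_nat (card (UNIV::'f set))"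
    by (simp add: sum.distrib)
  finally show ?thesis by simp
qed

lemma roots_bound:
  fixes n :: nat assumes "1 \<le> n"
  shows "card {x::'f::field. x ^ n = 1} \<le> n"
proof -
  define p :: "'f poly" where "p = monom 1 n - 1"
  have c: "coeff p n = 1" using assms by (simp add: p_def coeff_monom)
  hence "p \<noteq> 0" by auto
  have d: "degree p \<le> n" unfolding p_def
    by (rule degree_diff_le) (auto simp: degree_monom_le)
  have "{x. x ^ n = 1} = {x. poly p x = 0}" by (auto simp: p_def poly_monom)
  thus ?thesis using card_poly_roots_bound[OF \<open>p \<noteq> 0\<close>] d by simp
qed

lemma powsum0:
  fixes n :: nat
  assumes "1 \<le> n" "n + 2 \<le> card (UNIV::'f::{finite,field} set)"
  shows "(\<Sum>u\<in>UNIV - {0::'f}. u ^ n) = 0"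
proof -
  have "card {x::'f. x ^ n = 1} < card (UNIV - {0::'f})"
    using roots_bound[OF assms(1), where 'f='f] assms(2) by simp
  then obtain a where a: "a \<in> UNIV - {0::'f}" "a ^ n \<noteq> 1"
    by (metis (mono_tags, lifting) finite card_mono mem_Collect_eq not_le subsetI)
  have "(\<Sum>u\<in>UNIV - {0::'f}. u ^ n) = (\<Sum>u\<in>UNIV - {0::'f}. (a * u) ^ n)"
    using a by (intro sum.reindex_bij_witness[of _ "\<lambda>x. a * x" "\<lambda>x. x / a"]) auto
  also have "\<dots> = a ^ n * (\<Sum>u\<in>UNIV - {0::'f}. u ^ n)"
    by (simp add: power_mult_distrib sum_distrib_left)
  finally show ?thesis using a(2)
    by (metis mult_cancel_right1 mult.commute)
qed

lemma powsum:
  fixes j l :: nat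
  assumes "j + 2 \<le> card (UNIV::'f::{finite,field} set)" "l + 2 \<le> card (UNIV::'f set)"
  shows "(\<Sum>u\<in>UNIV - {0::'f}. u ^ j / u ^ l) = (if j = l then -1 else 0)"
proof (cases "l \<le> j")
  case True
  have "(\<Sum>u\<in>UNIV - {0::'f}. u ^ j / u ^ l) = (\<Sum>u\<in>UNIV - {0::'f}. u ^ (j - l))"
    using True by (intro sum.cong) (auto simp: power_diff)
  moreover have "j \<noteq> l \<Longrightarrow> (\<Sum>u\<in>UNIV - {0::'f}. u ^ (j - l)) = 0"
    using True assms by (intro powsum0) auto
  moreover have "(\<Sum>u\<in>UNIV - {0::'f}. (1::'f)) = -1"
proof -
    have "card (UNIV - {0::'f}) = card (UNIV::'f set) - 1" by (simp add: card_Diff_singleton)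
    moreover have "card (UNIV::'f set) \<ge> 1" using assms by simp
    ultimately have "of_nat (card (UNIV - {0::'f})) = (of_nat (card (UNIV::'f set)) :: 'f) - 1"
      by (simp add: of_nat_diff)
    thus ?thesis using card_char0[where 'f='f] by simp
  qed
  ultimately show ?thesis by auto
next
  case False
  have "(\<Sum>u\<in>UNIV - {0::'f}. u ^ j / u ^ l) = (\<Sum>u\<in>UNIV - {0::'f}. inverse u ^ (l - j))"
  proof (intro sum.cong refl)
    fix u :: 'f assume u: "u \<in> UNIV - {0}"
    have "u ^ l = u ^ j * u ^ (l - j)" using False by (simp add: power_add[symmetric])
    thus "u ^ j / u ^ l = inverse u ^ (l - j)" using u by (simp add: power_inverse[symmetric] inverse_eq_divide[symmetric])
  qed
  also have "\<dots> = (\<Sum>u\<in>UNIV - {0::'f}. u ^ (l - j))"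
    by (rule sum.reindex_bij_witness[of _ inverse inverse]) auto
  also have "\<dots> = 0" using False assms by (intro powsum0) auto
  finally show ?thesis using False by simp
qed


lemma swap_offdiag:
  fixes F :: "'a::finite \<Rightarrow> 'a \<Rightarrow> 'c::ab_group_add"
  shows "(\<Sum>b\<in>UNIV. \<Sum>s\<in>UNIV-{b}. F b s) = (\<Sum>s\<in>UNIV. \<Sum>b\<in>UNIV-{s}. F b s)"
proof -
  have "(\<Sum>b\<in>UNIV. \<Sum>s\<in>UNIV-{b}. F b s) = (\<Sum>b\<in>UNIV. \<Sum>s\<in>UNIV. F b s) - (\<Sum>b\<in>UNIV. F b b)"
    by (simp add: sum_diff1 sum_subtractf)
  also have "\<dots> = (\<Sum>s\<in>UNIV. \<Sum>b\<in>UNIV. F b s) - (\<Sum>b\<in>UNIV. F b b)"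
    by (subst sum.swap) (rule refl)
  also have "\<dots> = (\<Sum>s\<in>UNIV. \<Sum>b\<in>UNIV-{s}. F b s)"
    by (simp add: sum_diff1 sum_subtractf)
  finally show ?thesis .
qed

lemma emb_facts:
  assumes "field_embedding \<phi>"
  shows "\<phi> 0 = 0" "\<phi> (-1) = -1" "\<And>x y. \<phi> (x * y) = \<phi> x * \<phi> y"
    "\<And>n. \<phi> ((-1) ^ n) = (-1) ^ n"
    "\<And>f A. finite A \<Longrightarrow> \<phi> (sum f A) = (\<Sum>x\<in>A. \<phi> (f x))"
proof -
  have add: "\<And>x y. \<phi> (x + y) = \<phi> x + \<phi> y" and mul: "\<And>x y. \<phi> (x * y) = \<phi> x * \<phi> y"
    and one: "\<phi> 1 = 1" using assms by (auto simp: field_embedding_def)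
  have "\<phi> 0 + \<phi> 0 = \<phi> 0 + 0" using add[of 0 0] by simp
  then show z: "\<phi> 0 = 0" by (rule add_left_imp_eq)
  have "\<phi> (-1) + 1 = 0" using add[of "-1" 1] z one by simp
  then show m: "\<phi> (-1) = -1" by (simp add: eq_neg_iff_add_eq_0)
  show "\<And>x y. \<phi> (x * y) = \<phi> x * \<phi> y" by (rule mul)
  show "\<And>n. \<phi> ((-1) ^ n) = (-1) ^ n"
proof -
    fix n show "\<phi> ((-1) ^ n) = (-1) ^ n" by (induction n) (simp_all only: power_0 power_Suc mul one m)
  qed
  show "\<And>f A. finite A \<Longrightarrow> \<phi> (sum f A) = (\<Sum>x\<in>A. \<phi> (f x))"
proof -
    fix f A assume "finite A"
    thus "\<phi> (sum f A) = (\<Sum>x\<in>A. \<phi> (f x))" by (induction A rule: finite_induct) (simp_all add: z add)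
  qed
qed

lemma inner:
  fixes s r :: "'f::{finite,field}" and l t :: nat
  assumes "l + 2 \<le> card (UNIV::'f set)" "t + 2 \<le> card (UNIV::'f set)"
  shows "(\<Sum>b\<in>UNIV - {s}. (b - r) ^ t / (s - b) ^ l) =
    (if l \<le> t then (-1) ^ (l + 1) * of_nat (t choose l) * (s - r) ^ (t - l) else 0)"
proof -
  define c where "c = s - r"
  have "(\<Sum>b\<in>UNIV - {s}. (b - r) ^ t / (s - b) ^ l) = (\<Sum>u\<in>UNIV - {0}. (-u + c) ^ t / u ^ l)"
  proof (rule sum.reindex_bij_witness[of _ "\<lambda>u. s - u" "\<lambda>b. s - b"])
    fix b assume "b \<in> UNIV - {s}"
    have e: "- (s - b) + c = b - r" by (simp add: c_def algebra_simps)
    show "(- (s - b) + c) ^ t / (s - b) ^ l = (b - r) ^ t / (s - b) ^ l" by (simp only: e)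
  qed auto
  also have "\<dots> = (\<Sum>u\<in>UNIV - {0}. \<Sum>j\<le>t. of_nat (t choose j) * (-1) ^ j * c ^ (t - j) * (u ^ j / u ^ l))"
  proof (intro sum.cong refl)
    fix u :: 'f
    have "(-u + c) ^ t = (\<Sum>j\<le>t. of_nat (t choose j) * (-u) ^ j * c ^ (t - j))"
      by (rule binomial_ring)
    also have "\<dots> = (\<Sum>j\<le>t. of_nat (t choose j) * (-1) ^ j * c ^ (t - j) * u ^ j)"
      by (intro sum.cong refl) (simp only: power_minus[of u] mult.assoc mult.commute mult.left_commute)
    finally have "(-u + c) ^ t / u ^ l = (\<Sum>j\<le>t. of_nat (t choose j) * (-1) ^ j * c ^ (t - j) * u ^ j / u ^ l)"
      by (simp only: sum_divide_distrib)
    thus "(-u + c) ^ t / u ^ l = (\<Sum>j\<le>t. of_nat (t choose j) * (-1) ^ j * c ^ (t - j) * (u ^ j / u ^ l))"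
      by (simp only: times_divide_eq_right)
  qed
  also have "\<dots> = (\<Sum>j\<le>t. of_nat (t choose j) * (-1) ^ j * c ^ (t - j) * (\<Sum>u\<in>UNIV - {0}. u ^ j / u ^ l))"
    unfolding sum_distrib_left by (rule sum.swap)
  also have "\<dots> = (\<Sum>j\<le>t. if j = l then - (of_nat (t choose j) * (-1) ^ j * c ^ (t - j)) else 0)"
  proof (intro sum.cong refl)
    fix j assume "j \<in> {..t}"
    have "j + 2 \<le> card (UNIV::'f set)" using assms \<open>j \<in> {..t}\<close> by simp
    show "of_nat (t choose j) * (-1) ^ j * c ^ (t - j) * (\<Sum>u\<in>UNIV - {0::'f}. u ^ j / u ^ l) =
      (if j = l then - (of_nat (t choose j) * (-1) ^ j * c ^ (t - j)) else 0)"
    proof -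
      have P: "(\<Sum>u\<in>UNIV - {0::'f}. u ^ j / u ^ l) = (if j = l then -1 else 0)"
        using \<open>j + 2 \<le> card (UNIV::'f set)\<close> assms(1) by (rule powsum)
      show ?thesis by (simp only: P) simp
    qed
  qed
  also have "\<dots> = (if l \<le> t then (-1) ^ (l + 1) * of_nat (t choose l) * c ^ (t - l) else 0)"
    by (simp add: sum.delta')
  finally show ?thesis by (simp add: c_def)
qed

theorem proposition8p5:
  fixes \<phi> :: "'f::{finite,field} \<Rightarrow> 'c::field"
    and k :: int and l t :: nat and r :: 'f and X :: "'f \<Rightarrow> 'c"
  assumes emb: "field_embedding \<phi>"
    and l1: "1 \<le> l" and t1: "1 \<le> t"
    and lk: "int l \<le> k - 2" and tk: "int t \<le> k - 2"
    and kq: "k - 2 \<le> int (card (UNIV::'f set)) - 2"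
  shows "(\<Sum>b\<in>(UNIV::'f set). \<Sum>s\<in>UNIV - {b}. \<phi> ((b - r) ^ t / (s - b) ^ l) * X s) =
    (if l < t then (\<Sum>s\<in>UNIV. (-1) ^ (l + 1) * \<phi> (of_nat (t choose l) * (s - r) ^ (t - l)) * X s)
     else if t = l then (\<Sum>s\<in>UNIV. (-1) ^ (l + 1) * X s)
     else 0)"
proof -
  have q: "l + 2 \<le> card (UNIV::'f set)" "t + 2 \<le> card (UNIV::'f set)" using lk tk kq by linarith+
  note E = emb_facts[OF emb]
  have one: "\<phi> 1 = 1" using emb by (simp add: field_embedding_def)
  define g where "g = (\<lambda>b s. (b - r) ^ t / (s - b) ^ l)"
  define h where "h = (\<lambda>s. if l \<le> t then (-1) ^ (l + 1) * of_nat (t choose l) * (s - r) ^ (t - l) else (0::'f))"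
  have "(\<Sum>b\<in>(UNIV::'f set). \<Sum>s\<in>UNIV - {b}. \<phi> ((b - r) ^ t / (s - b) ^ l) * X s)
      = (\<Sum>s\<in>(UNIV::'f set). \<Sum>b\<in>UNIV - {s}. \<phi> (g b s) * X s)"
    unfolding g_def by (rule swap_offdiag)
  also have "\<dots> = (\<Sum>s\<in>(UNIV::'f set). \<phi> (\<Sum>b\<in>UNIV - {s}. g b s) * X s)"
  proof (intro sum.cong refl)
    fix s :: 'f
    have "\<phi> (\<Sum>b\<in>UNIV - {s}. g b s) = (\<Sum>b\<in>UNIV - {s}. \<phi> (g b s))" by (rule E(5)) simp
    thus "(\<Sum>b\<in>UNIV - {s}. \<phi> (g b s) * X s) = \<phi> (\<Sum>b\<in>UNIV - {s}. g b s) * X s"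
      by (simp only: sum_distrib_right)
  qed
  also have "\<dots> = (\<Sum>s\<in>(UNIV::'f set). \<phi> (h s) * X s)"
  proof (intro sum.cong refl)
    fix s :: 'f
    have "(\<Sum>b\<in>UNIV - {s}. g b s) = h s" unfolding g_def h_def by (rule inner[OF q])
    thus "\<phi> (\<Sum>b\<in>UNIV - {s}. g b s) * X s = \<phi> (h s) * X s" by (simp only:)
  qed
  also have "\<dots> = (if l < t then (\<Sum>s\<in>UNIV. (-1) ^ (l + 1) * \<phi> (of_nat (t choose l) * (s - r) ^ (t - l)) * X s)
     else if t = l then (\<Sum>s\<in>UNIV. (-1) ^ (l + 1) * X s)
     else 0)"
  proof (cases "l < t")
    case True
    have "\<phi> (h s) * X s = (-1) ^ (l + 1) * \<phi> (of_nat (t choose l) * (s - r) ^ (t - l)) * X s" for s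
    proof -
      have "h s = (-1) ^ (l + 1) * (of_nat (t choose l) * (s - r) ^ (t - l))"
        using True unfolding h_def by (simp only: if_True mult.assoc less_imp_le)
      thus ?thesis by (simp only: E(3) E(4))
    qed
    thus ?thesis using True by simp
  next
    case False
    show ?thesis
    proof (cases "t = l")
      case True
      have "\<phi> (h s) * X s = (-1) ^ (l + 1) * X s" for s
      proof -
        have "h s = (-1) ^ (l + 1) * 1"
          using True unfolding h_def by simp
        thus ?thesis by (simp only: E(3) E(4) one mult_1_right)
      qed
      thus ?thesis using True by simp
    next
      case False
      hence "h s = 0" for s using \<open>\<not> l < t\<close> unfolding h_def by simp
      thus ?thesis using False \<open>\<not> l < t\<close> by (simp add: E(1))
    qed
  qed
  finally show ?thesis .
qed

end
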